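(* Let $p>2$, $\beta=1/(p-1)$, and let $u$ be an ancient solution of the half-space problem $u_t-\Delta u=|\nabla u|^p$ in $Q:=\mathbb{R}^n_+\times(-\infty,0)$, $u=0$ on $\partial\mathbb{R}^n_+\times(-\infty,0)$. Then there is $C=C(n,p)>0$ such that $$u(x,t)\ge -C\,x_n^{1-\beta}\quad\text{for all }(x,t)\in Q.$$
   Context: $\mathbb{R}^n_+:=\{x\in\mathbb{R}^n: x_n>0\}$. An ancient solution of the half-space problem is a function $u\in C^{2,1}(Q)\cap C(\overline Q)$ satisfying the PDE pointwise in $Q$ and $u=0$ pointwise on $\partial\mathbb{R}^n_+\times(-\infty,0)$. *)

theory Defs
  imports "HOL-Analysis.Analysis"
begin

text \<open>Points of R^n are vectors of type real^'n; the coordinate k plays the role of x_n.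
  The open half-space R^n_+ = {x. x_n > 0}; Q = R^n_+ \<times> (-\<infinity>,0).\<close>

definition half_space :: "'n::finite \<Rightarrow> (real^'n) set" where
  "half_space k = {x. x $ k > 0}"

definition QQ :: "'n::finite \<Rightarrow> ((real^'n) \<times> real) set" where
  "QQ k = half_space k \<times> {..<0}"

definition ancient_solution :: "real \<Rightarrow> 'n::finite \<Rightarrow> (real^'n \<Rightarrow> real \<Rightarrow> real) \<Rightarrow> bool" where
  "ancient_solution p k u \<longleftrightarrow>
     continuous_on (closure (QQ k)) (\<lambda>(x,t). u x t) \<and>
     (\<exists>(Du :: real^'n \<Rightarrow> real \<Rightarrow> real^'n) (D2u :: real^'n \<Rightarrow> real \<Rightarrow> real^'n^'n)
        (ut :: real^'n \<Rightarrow> real \<Rightarrow> real).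
        (\<forall>(x,t)\<in>QQ k.
            ((\<lambda>y. u y t) has_derivative (\<lambda>h. Du x t \<bullet> h)) (at x) \<and>
            ((\<lambda>y. Du y t) has_derivative (\<lambda>h. D2u x t *v h)) (at x) \<and>
            ((\<lambda>s. u x s) has_real_derivative ut x t) (at t) \<and>
            ut x t - (\<Sum>i\<in>UNIV. D2u x t $ i $ i) = norm (Du x t) powr p) \<and>
        continuous_on (QQ k) (\<lambda>(x,t). Du x t) \<and>
        continuous_on (QQ k) (\<lambda>(x,t). D2u x t) \<and>
        continuous_on (QQ k) (\<lambda>(x,t). ut x t)) \<and>
     (\<forall>x t. x $ k = 0 \<longrightarrow> t < 0 \<longrightarrow> u x t = 0)"

end

theory Submission
  imports Defs
begin

definition Psi :: "real \<Rightarrow> real" where "Psi s = -(s^2) / (1 - s^2)"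
definition Psi1 :: "real \<Rightarrow> real" where "Psi1 s = -(2 * s) / (1 - s^2)^2"
definition Psi2 :: "real \<Rightarrow> real" where "Psi2 s = -(2 + 6 * s^2) / (1 - s^2)^3"

lemma sq_lt1: "\<bar>s::real\<bar> < 1 \<Longrightarrow> s^2 < 1"
  by (simp add: abs_square_less_1)


lemma Psi_deriv: assumes "\<bar>s\<bar> < 1" shows "(Psi has_real_derivative Psi1 s) (at s)"
proof -
  have h: "1 - s^2 \<noteq> 0" using sq_lt1[OF assms] by auto
  have d1: "((\<lambda>s. -(s^2)) has_real_derivative (-  2 * s)) (at s)" by (auto intro!: derivative_eq_intros)
  have d2: "((\<lambda>s. 1 - s^2) has_real_derivative (-  2 * s)) (at s)" by (auto intro!: derivative_eq_intros)
  have "((\<lambda>s. -(s^2) / (1 - s^2)) has_real_derivative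
      ((-  2 * s) * (1-s^2) - (- (s^2)) * (-  2 * s))/((1-s^2)*(1-s^2))) (at s)"
    by (rule DERIV_divide[OF d1 d2]) (use h in simp)
  moreover have "((-  2 * s) * (1-s^2) - (- (s^2)) * (-  2 * s))/((1-s^2)*(1-s^2)) = Psi1 s"
  proof -
    have "((-  2 * s) * (1-s^2) - (- (s^2)) * (-  2 * s)) = -(2* s)" by (simp add: algebra_simps power2_eq_square)
    then show ?thesis unfolding Psi1_def by (simp add: power2_eq_square)
  qed
  ultimately show ?thesis unfolding Psi_def[abs_def] by (rule DERIV_cong)
qed

lemma Psi1_deriv: assumes "\<bar>s\<bar> < 1" shows "(Psi1 has_real_derivative Psi2 s) (at s)"
proof -
  have h: "1 - s^2 \<noteq> 0" using sq_lt1[OF assms] by auto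
  have d1: "((\<lambda>s. -(2* s)) has_real_derivative (-  2)) (at s)" by (auto intro!: derivative_eq_intros)
  have d2: "((\<lambda>s. (1 - s^2)^2) has_real_derivative 2 * (1 - s^2) * (-  2 * s)) (at s)"
    by (auto intro!: derivative_eq_intros)
  have "((\<lambda>s. -(2* s) / (1 - s^2)^2) has_real_derivative
      ((- 2) * (1-s^2)^2 - (- (2* s)) * (2 * (1 - s^2) * (-  2 * s)))/((1-s^2)^2*(1-s^2)^2)) (at s)"
    by (rule DERIV_divide[OF d1 d2]) (use h in simp)
  moreover have "((- 2) * (1-s^2)^2 - (- (2* s)) * (2 * (1 - s^2) * (-  2 * s)))/((1-s^2)^2*(1-s^2)^2) = Psi2 s"
  proof -
    have "((- 2) * (1-s^2)^2 - (- (2* s)) * (2 * (1 - s^2) * (-  2 * s))) = (- (2 + 6 * s^2)) * (1-s^2)"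
      by (simp add: algebra_simps power2_eq_square)
    moreover have "((1-s^2)^2*(1-s^2)^2) = (1-s^2)^3 * (1 - s^2)" by (simp add: power2_eq_square power3_eq_cube)
    ultimately show ?thesis unfolding Psi2_def using h by simp
  qed
  ultimately show ?thesis unfolding Psi1_def[abs_def] by (rule DERIV_cong)
qed

lemma Psi_nonpos: "\<bar>s\<bar> < 1 \<Longrightarrow> Psi s \<le> 0"
  using sq_lt1[of s] unfolding Psi_def by (simp add: divide_nonneg_pos)

lemma Psi_0: "Psi 0 = 0" by (simp add: Psi_def)
lemma Psi_half: "Psi (1/2) = -1/3" by (simp add: Psi_def power2_eq_square)

lemma Psi1_nonpos: "0 \<le> s \<Longrightarrow> \<bar>s\<bar> < 1 \<Longrightarrow> Psi1 s \<le> 0"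
  unfolding Psi1_def by (simp add: divide_nonneg_pos)

lemma Psi_bound: assumes "\<bar>s\<bar> < 1" shows "Psi s \<le> 1 - 1 / (2 * (1 - \<bar>s\<bar>))"
proof -
  have q: "0 < 1 - s^2" using sq_lt1[OF assms] by simp
  have e: "1 - s^2 = (1 - \<bar>s\<bar>) * (1 + \<bar>s\<bar>)" by (simp add: algebra_simps power2_eq_square)
  have "1 - s^2 \<le> 2 * (1 - \<bar>s\<bar>)" unfolding e using assms by (subst mult.commute, intro mult_right_mono) auto
  hence "1 / (2 * (1 - \<bar>s\<bar>)) \<le> 1 / (1 - s^2)" using q by (intro divide_left_mono) auto
  moreover have "Psi s = 1 - 1/(1 - s^2)" unfolding Psi_def using q by (simp add: field_simps)
  ultimately show ?thesis by simp
qed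

lemma core_ineq:
  fixes \<kappa> p s :: real
  assumes k0: "0 < \<kappa>" and k1: "\<kappa> \<le> 1" and p2: "2 \<le> p" and s1: "\<bar>s\<bar> < 1"
  shows "- Psi2 s - \<kappa> * \<bar>Psi1 s\<bar> powr p \<le> 8 * (8/\<kappa>)^3"
proof -
  define q where "q = 1 / (1 - s^2)"
  have s2: "s^2 < 1" using sq_lt1[OF s1] .
  have s2': "0 \<le> s^2" by simp
  have q1: "1 \<le> q" unfolding q_def using s2 s2' by (simp add: field_simps)
  have qpos: "0 < q" using q1 by simp
  have mP2: "- Psi2 s = (2 + 6 * s^2) * q^3" unfolding Psi2_def q_def using s2 by (simp add: field_simps)
  have mP2b: "- Psi2 s \<le> 8 * q^3" unfolding mP2 using s2 qpos by (intro mult_right_mono) auto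
  have P1: "\<bar>Psi1 s\<bar> = 2 * \<bar>s\<bar> * q^2" 
  proof -
    have "\<bar>(1 - s^2)^2\<bar> = (1-s^2)^2" by simp
    then show ?thesis unfolding Psi1_def q_def using s2 by (simp add: abs_divide abs_mult power_divide)
  qed
  have nn: "0 \<le> \<kappa> * \<bar>Psi1 s\<bar> powr p" using k0 by simp
  show ?thesis
  proof (cases "q \<le> 8/\<kappa>")
    case True
    have "8 * q^3 \<le> 8 * (8/\<kappa>)^3" using True qpos by (intro mult_left_mono power_mono) auto
    then show ?thesis using mP2b nn by linarith
  next
    case False
    hence qb: "8 < \<kappa> * q" using k0 by (simp add: field_simps)
    have "1/q < \<kappa>/8" using qb qpos k0 by (simp add: field_simps)
    moreover have "s^2 = 1 - 1/q" unfolding q_def using s2 by (simp add: field_simps)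
    ultimately have "s^2 > 1/4" using k1 by linarith
    hence sh: "\<bar>s\<bar> \<ge> 1/2"
    proof -
      assume h4: "s^2 > 1/4"
      show ?thesis
      proof (rule ccontr)
        assume "\<not> \<bar>s\<bar> \<ge> 1/2"
        then have "\<bar>s\<bar>^2 < (1/2)^2" by (intro power_strict_mono) auto
        then show False using h4 by (simp add: power2_abs power_divide)
      qed
    qed
    have "q^2 \<le> \<bar>Psi1 s\<bar>" unfolding P1 using sh qpos by (simp add: mult_le_cancel_right1)
    moreover have "1 \<le> q^2" using q1 by simp
    ultimately have g1: "1 \<le> \<bar>Psi1 s\<bar>" and g2: "q^2 \<le> \<bar>Psi1 s\<bar>" by auto
    have "\<bar>Psi1 s\<bar> powr 2 \<le> \<bar>Psi1 s\<bar> powr p" using g1 p2 by (intro powr_mono) auto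
    moreover have "\<bar>Psi1 s\<bar> powr 2 = \<bar>Psi1 s\<bar>^2" using g1 by (simp add: powr_numeral)
    moreover have "q^4 \<le> \<bar>Psi1 s\<bar>^2" using g2 qpos
      by (metis (no_types, lifting) power_mono power_mult numeral_Bit0 numeral_times_numeral mult_2 zero_le_power2 semiring_norm(2) order_trans[OF _ power_mono] less_imp_le)
    ultimately have "q^4 \<le> \<bar>Psi1 s\<bar> powr p" by linarith
    hence "\<kappa> * q^4 \<le> \<kappa> * \<bar>Psi1 s\<bar> powr p" using k0 by simp
    moreover have "8 * q^3 - \<kappa> * q^4 = q^3 * (8 - \<kappa> * q)" by (simp add: algebra_simps power_numeral_reduce)
    moreover have "q^3 * (8 - \<kappa> * q) \<le> 0" using qb qpos by (intro mult_nonneg_nonpos) auto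
    moreover have "0 \<le> 8 * (8/\<kappa>)^3" using k0 by simp
    ultimately show ?thesis using mP2b by linarith
  qed
qed

definition psi :: "real \<Rightarrow> real \<Rightarrow> real \<Rightarrow> real \<Rightarrow> real" where
  "psi \<alpha> r c s = r powr \<alpha> * Psi ((s - c) / r)"
definition psi1 :: "real \<Rightarrow> real \<Rightarrow> real \<Rightarrow> real \<Rightarrow> real" where
  "psi1 \<alpha> r c s = r powr \<alpha> / r * Psi1 ((s - c) / r)"
definition psi2 :: "real \<Rightarrow> real \<Rightarrow> real \<Rightarrow> real \<Rightarrow> real" where
  "psi2 \<alpha> r c s = r powr \<alpha> / r^2 * Psi2 ((s - c) / r)"

lemma psi_deriv:
  assumes "0 < r" "\<bar>(s - c) / r\<bar> < 1"
  shows "(psi \<alpha> r c has_real_derivative psi1 \<alpha> r c s) (at s)"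
proof -
  have i: "((\<lambda>s. (s - c) / r) has_real_derivative 1 / r) (at s)"
    using assms(1) by (auto intro!: derivative_eq_intros)
  have "((\<lambda>s. Psi ((s - c) / r)) has_real_derivative Psi1 ((s - c) / r) * (1 / r)) (at s)"
    by (rule DERIV_chain2[OF Psi_deriv[OF assms(2)] i])
  then have "((\<lambda>s. r powr \<alpha> * Psi ((s - c) / r)) has_real_derivative r powr \<alpha> * (Psi1 ((s - c) / r) * (1 / r))) (at s)"
    by (rule DERIV_cmult)
  then show ?thesis unfolding psi_def[abs_def] psi1_def using assms(1) by (simp add: field_simps)
qed

lemma psi1_deriv:
  assumes "0 < r" "\<bar>(s - c) / r\<bar> < 1"
  shows "(psi1 \<alpha> r c has_real_derivative psi2 \<alpha> r c s) (at s)"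
proof -
  have i: "((\<lambda>s. (s - c) / r) has_real_derivative 1 / r) (at s)"
    using assms(1) by (auto intro!: derivative_eq_intros)
  have "((\<lambda>s. Psi1 ((s - c) / r)) has_real_derivative Psi2 ((s - c) / r) * (1 / r)) (at s)"
    by (rule DERIV_chain2[OF Psi1_deriv[OF assms(2)] i])
  then have "((\<lambda>s. r powr \<alpha> / r * Psi1 ((s - c) / r)) has_real_derivative r powr \<alpha> / r * (Psi2 ((s - c) / r) * (1 / r))) (at s)"
    by (rule DERIV_cmult)
  then show ?thesis unfolding psi1_def[abs_def] psi2_def using assms(1) by (simp add: field_simps power2_eq_square)
qed

lemma psi_nonpos: "\<bar>(s - c) / r\<bar> < 1 \<Longrightarrow> psi \<alpha> r c s \<le> 0"
  unfolding psi_def using Psi_nonpos by (simp add: mult_nonneg_nonpos)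

lemma psi1_nonpos: "0 < r \<Longrightarrow> c \<le> s \<Longrightarrow> \<bar>(s - c) / r\<bar> < 1 \<Longrightarrow> psi1 \<alpha> r c s \<le> 0"
  unfolding psi1_def using Psi1_nonpos[of "(s - c) / r"] by (simp add: mult_nonneg_nonpos divide_nonpos_pos)

lemma psi_face:
  assumes "0 < r" "\<bar>(s - c) / r\<bar> < 1" "1 - \<delta> \<le> \<bar>(s - c) / r\<bar>" "0 < \<delta>"
  shows "psi \<alpha> r c s \<le> r powr \<alpha> * (1 - 1 / (2 * \<delta>))"
proof -
  let ?z = "(s - c) / r"
  have "Psi ?z \<le> 1 - 1 / (2 * (1 - \<bar>?z\<bar>))" by (rule Psi_bound[OF assms(2)])
  moreover have "1 / (2 * \<delta>) \<le> 1 / (2 * (1 - \<bar>?z\<bar>))" using assms(2-4) by (intro divide_left_mono) auto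
  ultimately have "Psi ?z \<le> 1 - 1 / (2 * \<delta>)" by linarith
  then show ?thesis unfolding psi_def by (intro mult_left_mono) auto
qed

lemma scale_exp:
  fixes p :: real
  assumes p: "2 < p" shows "(1 - 1/(p-1) - 1) * p = (1 - 1/(p-1)) - 2"
  using p by (simp add: field_simps)

lemma psi_scaled_bound:
  fixes \<kappa> p r d :: real
  assumes p2: "2 < p" and k0: "0 < \<kappa>" and k1: "\<kappa> \<le> 1" and d0: "0 < d" and rd: "d \<le> r"
    and s1: "\<bar>(s - c) / r\<bar> < 1"
  defines "\<alpha> \<equiv> 1 - 1/(p-1)"
  shows "- psi2 \<alpha> r c s - \<kappa> * \<bar>psi1 \<alpha> r c s\<bar> powr p \<le> d powr (\<alpha> - 2) * (8 * (8/\<kappa>)^3)"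
proof -
  let ?z = "(s - c) / r"
  have r0: "0 < r" using d0 rd by linarith
  have a1: "r powr \<alpha> / r = r powr (\<alpha> - 1)" using r0 by (simp add: powr_diff)
  have a2: "r powr \<alpha> / r^2 = r powr (\<alpha> - 2)" using r0 by (simp add: powr_diff powr_numeral)
  have a3: "(r powr (\<alpha> - 1)) powr p = r powr (\<alpha> - 2)"
    unfolding powr_powr \<alpha>_def using scale_exp[OF p2] by simp
  have "\<bar>psi1 \<alpha> r c s\<bar> powr p = (r powr (\<alpha> - 1) * \<bar>Psi1 ?z\<bar>) powr p"
    unfolding psi1_def a1 by (simp add: abs_mult)
  also have "\<dots> = r powr (\<alpha> - 2) * \<bar>Psi1 ?z\<bar> powr p"
    by (simp add: powr_mult a3)
  finally have e1: "\<bar>psi1 \<alpha> r c s\<bar> powr p = r powr (\<alpha> - 2) * \<bar>Psi1 ?z\<bar> powr p" .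
  have e2: "psi2 \<alpha> r c s = r powr (\<alpha> - 2) * Psi2 ?z" unfolding psi2_def a2 ..
  have "- psi2 \<alpha> r c s - \<kappa> * \<bar>psi1 \<alpha> r c s\<bar> powr p = r powr (\<alpha> - 2) * (- Psi2 ?z - \<kappa> * \<bar>Psi1 ?z\<bar> powr p)"
    unfolding e1 e2 by (simp add: algebra_simps)
  also have "\<dots> \<le> r powr (\<alpha> - 2) * (8 * (8/\<kappa>)^3)"
    using core_ineq[OF k0 k1 _ s1, of p] p2 by (intro mult_left_mono) auto
  also have "\<dots> \<le> d powr (\<alpha> - 2) * (8 * (8/\<kappa>)^3)"
  proof (rule mult_right_mono)
    have "\<alpha> - 2 \<le> 0" unfolding \<alpha>_def using p2 by (simp add: field_simps)
    then show "r powr (\<alpha> - 2) \<le> d powr (\<alpha> - 2)" using d0 rd by (rule powr_mono2')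
  qed (use k0 in simp)
  finally show ?thesis .
qed

definition rr :: "'n \<Rightarrow> real \<Rightarrow> 'n \<Rightarrow> real" where "rr k d i = (if i = k then 2*d else d)"
definition cen :: "'n \<Rightarrow> real^'n \<Rightarrow> 'n \<Rightarrow> real" where "cen k x0 i = (if i = k then 0 else x0$i)"

lemma key_ineq:
  fixes k :: "'n::finite" and x x0 :: "real^'n"
  assumes p2: "2 < p" and d0: "0 < d" and tt: "t1 < t" and xk: "0 < x$k"
    and xin: "\<forall>i. \<bar>(x$i - cen k x0 i) / rr k d i\<bar> < 1"
    and c0: "0 < c" and K0: "0 < K" and xk2: "x$k \<le> 2*d"
    and hK: "2*d/K \<le> (1/(real CARD('n)+1))/2 * c powr (p-2)"
    and hc: "real CARD('n) * (d powr ((1 - 1/(p-1)) - 2) * (8 * (8/(1/(real CARD('n)+1)))^3))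
               < (1/(real CARD('n)+1))/2 * c powr p"
  shows "K * x$k / (t - t1)^2 - (\<Sum>i\<in>UNIV. psi2 (1 - 1/(p-1)) (rr k d i) (cen k x0 i) (x$i))
     < norm ((\<chi> i. psi1 (1 - 1/(p-1)) (rr k d i) (cen k x0 i) (x$i) - (if i = k then c + K/(t - t1) else 0)) :: real^'n) powr p"
proof -
  define N where "N = real CARD('n)"
  define \<kappa> where "\<kappa> = 1/(N+1)"
  define S0 where "S0 = 8 * (8/\<kappa>)^3"
  define \<alpha> where "\<alpha> = 1 - 1/(p-1)"
  define a where "a = c + K/(t - t1)"
  define G :: "real^'n" where "G = (\<chi> i. psi1 \<alpha> (rr k d i) (cen k x0 i) (x$i) - (if i = k then a else 0))"
  define f1 where "f1 i = psi1 \<alpha> (rr k d i) (cen k x0 i) (x$i)" for i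
  define f2 where "f2 i = psi2 \<alpha> (rr k d i) (cen k x0 i) (x$i)" for i
  have N0: "0 \<le> N" unfolding N_def by simp
  have k0: "0 < \<kappa>" and k1: "\<kappa> \<le> 1" unfolding \<kappa>_def using N0 by (auto simp: field_simps)
  have b0: "0 < K/(t - t1)" using K0 tt by simp
  have a0: "0 < a" and ca: "c \<le> a" unfolding a_def using c0 b0 by auto
  have rrd: "d \<le> rr k d i" for i unfolding rr_def using d0 by auto
  have rr0: "0 < rr k d i" for i using rrd[of i] d0 by linarith
  have t1b: "K * x$k / (t - t1)^2 \<le> \<kappa>/2 * a powr p"
  proof -
    have "K * x$k / (t - t1)^2 = (K/(t-t1))^2 * x$k / K" using K0 tt by (simp add: power_divide power2_eq_square)
    also have "\<dots> \<le> a^2 * (2*d) / K"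
    proof -
      have "(K/(t-t1))^2 \<le> a^2" using b0 c0 unfolding a_def by (intro power_mono) auto
      then have "(K/(t-t1))^2 * x$k \<le> a^2 * (2*d)" using xk xk2 by (intro mult_mono) auto
      then show ?thesis using K0 by (simp add: divide_right_mono)
    qed
    also have "\<dots> = a^2 * (2*d/K)" by simp
    also have "\<dots> \<le> a^2 * (\<kappa>/2 * c powr (p-2))" using hK unfolding \<kappa>_def N_def by (intro mult_left_mono) auto
    also have "\<dots> \<le> a^2 * (\<kappa>/2 * a powr (p-2))" using ca c0 p2 k0
      by (intro mult_left_mono powr_mono2) auto
    also have "\<dots> = \<kappa>/2 * (a powr 2 * a powr (p-2))" using a0 by (simp add: powr_numeral)
    also have "\<dots> = \<kappa>/2 * a powr p" by (simp add: powr_add[symmetric])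
    finally show ?thesis .
  qed
  have per: "- f2 i - \<kappa> * \<bar>f1 i\<bar> powr p \<le> d powr (\<alpha> - 2) * S0" for i
    unfolding f1_def f2_def S0_def \<alpha>_def
    using psi_scaled_bound[OF p2 k0 k1 d0 rrd[of i] xin[rule_format, of i]] by simp
  have Gi: "\<bar>f1 i\<bar> \<le> norm G" for i
  proof (cases "i = k")
    case True
    have "f1 k \<le> 0" unfolding f1_def
      using psi1_nonpos[where r="rr k d k" and c="cen k x0 k" and s="x$k" and \<alpha>=\<alpha>, OF rr0] xin[rule_format, of k] xk by (simp add: cen_def)
    then have "\<bar>f1 k\<bar> \<le> \<bar>G$k\<bar>" unfolding G_def f1_def using a0 by simp
    then show ?thesis using True component_le_norm_cart[of G k] by simp
  next
    case False
    then have "\<bar>f1 i\<bar> = \<bar>G$i\<bar>" unfolding G_def f1_def by simp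
    then show ?thesis using component_le_norm_cart[of G i] by simp
  qed
  have Ga: "a \<le> norm G"
  proof -
    have "f1 k \<le> 0" unfolding f1_def
      using psi1_nonpos[where r="rr k d k" and c="cen k x0 k" and s="x$k" and \<alpha>=\<alpha>, OF rr0] xin[rule_format, of k] xk by (simp add: cen_def)
    then have "a \<le> \<bar>G$k\<bar>" unfolding G_def f1_def using a0 by simp
    then show ?thesis using component_le_norm_cart[of G k] by simp
  qed
  have Gp1: "\<bar>f1 i\<bar> powr p \<le> norm G powr p" for i using Gi[of i] p2 by (intro powr_mono2) auto
  have Gpa: "a powr p \<le> norm G powr p" using Ga a0 p2 by (intro powr_mono2) auto
  have sumG: "a powr p + (\<Sum>i\<in>UNIV. \<bar>f1 i\<bar> powr p) \<le> (N+1) * norm G powr p"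
  proof -
    have "(\<Sum>i\<in>UNIV. \<bar>f1 i\<bar> powr p) \<le> N * norm G powr p"
      unfolding N_def using sum_bounded_above[of UNIV "\<lambda>i. \<bar>f1 i\<bar> powr p" "norm G powr p"] Gp1 by simp
    then show ?thesis using Gpa by (simp add: algebra_simps)
  qed
  have sumG': "\<kappa> * a powr p + \<kappa> * (\<Sum>i\<in>UNIV. \<bar>f1 i\<bar> powr p) \<le> norm G powr p"
  proof -
    have "\<kappa> * (a powr p + (\<Sum>i\<in>UNIV. \<bar>f1 i\<bar> powr p)) \<le> \<kappa> * ((N+1) * norm G powr p)"
      using sumG k0 by (intro mult_left_mono) auto
    also have "\<dots> = norm G powr p" unfolding \<kappa>_def using N0 by simp
    finally show ?thesis by (simp add: algebra_simps)
  qed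
  have cpa: "c powr p \<le> a powr p" using ca c0 p2 by (intro powr_mono2) auto
  have hc0: "N * (d powr (\<alpha> - 2) * S0) < \<kappa>/2 * c powr p"
    using hc unfolding N_def \<kappa>_def S0_def \<alpha>_def .
  have "\<kappa>/2 * c powr p \<le> \<kappa>/2 * a powr p" using cpa k0 by simp
  with hc0 have hc': "N * (d powr (\<alpha> - 2) * S0) < \<kappa>/2 * a powr p" by linarith
  have sum2: "- (\<Sum>i\<in>UNIV. f2 i) \<le> \<kappa> * (\<Sum>i\<in>UNIV. \<bar>f1 i\<bar> powr p) + N * (d powr (\<alpha> - 2) * S0)"
  proof -
    have "(\<Sum>i\<in>UNIV. - f2 i) \<le> (\<Sum>i\<in>UNIV. \<kappa> * \<bar>f1 i\<bar> powr p + d powr (\<alpha> - 2) * S0)"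
    proof (rule sum_mono)
      fix i show "- f2 i \<le> \<kappa> * \<bar>f1 i\<bar> powr p + d powr (\<alpha> - 2) * S0" using per[of i] by linarith
    qed
    then show ?thesis unfolding N_def by (simp add: sum.distrib sum_distrib_left sum_negf)
  qed
  have "K * x$k / (t - t1)^2 - (\<Sum>i\<in>UNIV. f2 i) < norm G powr p"
    using t1b sum2 hc' sumG' by linarith
  then show ?thesis unfolding G_def f1_def f2_def a_def \<alpha>_def .
qed

lemma second_order_min:
  fixes g g' :: "real \<Rightarrow> real"
  assumes s0: "0 < \<sigma>" and mn: "\<forall>s. \<bar>s\<bar> < \<sigma> \<longrightarrow> g 0 \<le> g s"
    and dg: "\<forall>s. \<bar>s\<bar> < \<sigma> \<longrightarrow> (g has_real_derivative g' s) (at s)"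
    and dg2: "(g' has_real_derivative L) (at 0)" and g0: "g' 0 = 0"
  shows "0 \<le> L"
proof (rule ccontr)
  assume "\<not> 0 \<le> L"
  then have "L < 0" by simp
  from DERIV_neg_dec_right[OF dg2 this] obtain e where e0: "0 < e" and he: "\<forall>h>0. h < e \<longrightarrow> g' (0 + h) < g' 0" by blast
  define h where "h = min e \<sigma> / 2"
  have h0: "0 < h" and he': "h < e" and hs: "h < \<sigma>" unfolding h_def using e0 s0 by auto
  have neg: "g' y < 0" if "0 < y" "y \<le> h" for y using he[rule_format, of y] that he' g0 by simp
  have "\<exists>z>0. z < h \<and> g h - g 0 = (h - 0) * g' z"
    by (rule MVT2[OF h0]) (use dg hs in auto)
  then obtain z where z: "0 < z" "z < h" "g h - g 0 = h * g' z" by auto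
  have "h * g' z < 0" using neg[of z] z h0 by (simp add: mult_pos_neg)
  then have "g h < g 0" using z by linarith
  moreover have "g 0 \<le> g h" using mn hs h0 by simp
  ultimately show False by simp
qed

lemma time_min:
  fixes h :: "real \<Rightarrow> real"
  assumes dh: "(h has_real_derivative D) (at t)" and at: "a < t"
    and mn: "\<forall>s. a \<le> s \<and> s \<le> t \<longrightarrow> h t \<le> h s"
  shows "D \<le> 0"
proof (rule ccontr)
  assume "\<not> D \<le> 0"
  then have "0 < D" by simp
  from DERIV_pos_inc_left[OF dh this] obtain e where e0: "0 < e" and he: "\<forall>y>0. y < e \<longrightarrow> h (t - y) < h t" by blast
  define y where "y = min e (t - a) / 2"
  have "0 < y" "y < e" "y \<le> t - a" unfolding y_def using e0 at by auto
  then have "h (t - y) < h t" and "h t \<le> h (t - y)" using he mn by auto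
  then show False by simp
qed

lemma axis_comp: "(x + s *\<^sub>R axis i 1) $ j = x $ j + (if j = i then s else 0)"
  by (simp add: axis_def)

lemma dir_deriv:
  fixes f :: "real^'n \<Rightarrow> real"
  assumes "(f has_derivative (\<lambda>h. D \<bullet> h)) (at (x + s *\<^sub>R e))"
  shows "((\<lambda>s. f (x + s *\<^sub>R e)) has_real_derivative (D \<bullet> e)) (at s)"
proof -
  have l: "((\<lambda>s. x + s *\<^sub>R e) has_derivative (\<lambda>h. h *\<^sub>R e)) (at s)"
    by (auto intro!: derivative_eq_intros)
  have "((\<lambda>s. f (x + s *\<^sub>R e)) has_derivative (\<lambda>h. D \<bullet> (h *\<^sub>R e))) (at s)"
    using has_derivative_compose[OF l assms] by simp
  moreover have "(\<lambda>h. D \<bullet> (h *\<^sub>R e)) = (*) (D \<bullet> e)" by (auto simp: algebra_simps)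
  ultimately show ?thesis unfolding has_field_derivative_def by simp
qed

lemma dir_deriv_vec:
  fixes F :: "real^'n \<Rightarrow> real^'n"
  assumes "(F has_derivative (\<lambda>h. A *v h)) (at (x + s *\<^sub>R e))"
  shows "((\<lambda>s. F (x + s *\<^sub>R e) \<bullet> e) has_real_derivative ((A *v e) \<bullet> e)) (at s)"
proof -
  have l: "((\<lambda>s. x + s *\<^sub>R e) has_derivative (\<lambda>h. h *\<^sub>R e)) (at s)"
    by (auto intro!: derivative_eq_intros)
  have "((\<lambda>s. F (x + s *\<^sub>R e)) has_derivative (\<lambda>h. A *v (h *\<^sub>R e))) (at s)"
    using has_derivative_compose[OF l assms] by simp
  then have "((\<lambda>s. F (x + s *\<^sub>R e) \<bullet> e) has_derivative (\<lambda>h. (A *v (h *\<^sub>R e)) \<bullet> e)) (at s)"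
    by (rule has_derivative_inner_left)
  moreover have "(\<lambda>h. (A *v (h *\<^sub>R e)) \<bullet> e) = (*) ((A *v e) \<bullet> e)"
    by (auto simp: algebra_simps matrix_vector_mult_scaleR)
  ultimately show ?thesis unfolding has_field_derivative_def by simp
qed

lemma diag_entry: "((A::real^'n^'n) *v axis i 1) \<bullet> axis i 1 = A $ i $ i"
  by (simp add: matrix_vector_mult_basis inner_axis column_def)

lemma sep_dir_deriv:
  fixes x :: "real^'n" and \<phi> \<phi>' :: "'n \<Rightarrow> real \<Rightarrow> real"
  assumes "(\<phi> i has_real_derivative \<phi>' i (x$i + s)) (at (x$i + s))"
  shows "((\<lambda>s. - A * (x + s *\<^sub>R axis i 1)$k + (\<Sum>j\<in>UNIV. \<phi> j ((x + s *\<^sub>R axis i 1)$j)))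
          has_real_derivative (\<phi>' i (x$i + s) - (if i = k then A else 0))) (at s)"
proof -
  have e: "(\<lambda>s. - A * (x + s *\<^sub>R axis i 1)$k + (\<Sum>j\<in>UNIV. \<phi> j ((x + s *\<^sub>R axis i 1)$j)))
     = (\<lambda>s. - A * (x$k + (if k = i then s else 0)) + (\<phi> i (x$i + s) + (\<Sum>j\<in>UNIV - {i}. \<phi> j (x$j))))"
  proof
    fix s
    have "(\<Sum>j\<in>UNIV. \<phi> j ((x + s *\<^sub>R axis i 1)$j)) = \<phi> i ((x + s *\<^sub>R axis i 1)$i) + (\<Sum>j\<in>UNIV - {i}. \<phi> j ((x + s *\<^sub>R axis i 1)$j))"
      by (rule sum.remove) auto
    also have "(\<Sum>j\<in>UNIV - {i}. \<phi> j ((x + s *\<^sub>R axis i 1)$j)) = (\<Sum>j\<in>UNIV - {i}. \<phi> j (x$j))"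
      by (rule sum.cong) (auto simp: axis_def)
    finally show "- A * (x + s *\<^sub>R axis i 1)$k + (\<Sum>j\<in>UNIV. \<phi> j ((x + s *\<^sub>R axis i 1)$j))
       = - A * (x$k + (if k = i then s else 0)) + (\<phi> i (x$i + s) + (\<Sum>j\<in>UNIV - {i}. \<phi> j (x$j)))"
      by (simp add: axis_def)
  qed
  have d1: "((\<lambda>s. \<phi> i (x$i + s)) has_real_derivative \<phi>' i (x$i + s)) (at s)"
  proof -
    have "((\<lambda>s. x$i + s) has_real_derivative 1) (at s)" by (auto intro!: derivative_eq_intros)
    from DERIV_chain2[OF assms this] show ?thesis by simp
  qed
  have d2: "((\<lambda>s. - A * (x$k + (if k = i then s else 0))) has_real_derivative (if i = k then - A else 0)) (at s)"
    by (cases "k = i") (auto intro!: derivative_eq_intros)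
  show ?thesis unfolding e
    by (rule DERIV_cong[OF DERIV_add[OF d2 DERIV_add[OF d1 DERIV_const[of "\<Sum>j\<in>UNIV - {i}. \<phi> j (x$j)"]]]]) simp
qed

lemma closure_QQ: "closure (QQ k) = {x. 0 \<le> x$k} \<times> {..0::real}"
proof -
  have "half_space k = {x. 0 < axis k 1 \<bullet> x}" unfolding half_space_def
    by (simp add: inner_commute inner_axis)
  then have "closure (half_space k) = {x. 0 \<le> axis k 1 \<bullet> x}"
    by (simp add: closure_halfspace_gt axis_eq_0_iff)
  also have "\<dots> = {x. 0 \<le> x$k}" by (simp add: inner_commute inner_axis)
  finally show ?thesis unfolding QQ_def closure_Times by simp
qed

lemma Kset_compact:
  fixes k :: "'n::finite"
  shows "compact {(x::real^'n,t::real). 0 \<le> x$k \<and> (\<forall>i. \<bar>x$i - cc i\<bar> \<le> \<rho> i) \<and> \<tau> \<le> t \<and> t \<le> t0}"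
proof -
  define Kx where "Kx = {x::real^'n. 0 \<le> x$k \<and> (\<forall>i. \<bar>x$i - cc i\<bar> \<le> \<rho> i)}"
  have e: "{(x::real^'n,t::real). 0 \<le> x$k \<and> (\<forall>i. \<bar>x$i - cc i\<bar> \<le> \<rho> i) \<and> \<tau> \<le> t \<and> t \<le> t0} = Kx \<times> {\<tau>..t0}"
    unfolding Kx_def by auto
  have cl: "closed Kx" unfolding Kx_def
    by (intro closed_Collect_conj closed_Collect_all closed_Collect_le continuous_intros)
  have bd: "bounded Kx"
  proof -
    have "norm x \<le> (\<Sum>i\<in>UNIV. \<bar>cc i\<bar> + \<bar>\<rho> i\<bar>)" if "x \<in> Kx" for x
    proof -
      have "norm x \<le> (\<Sum>i\<in>UNIV. \<bar>x$i\<bar>)" by (rule norm_le_l1_cart)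
      also have "\<dots> \<le> (\<Sum>i\<in>UNIV. \<bar>cc i\<bar> + \<bar>\<rho> i\<bar>)"
      proof (rule sum_mono)
        fix i have "\<bar>x$i - cc i\<bar> \<le> \<rho> i" using that unfolding Kx_def by auto
        then show "\<bar>x$i\<bar> \<le> \<bar>cc i\<bar> + \<bar>\<rho> i\<bar>" by linarith
      qed
      finally show ?thesis .
    qed
    then show ?thesis unfolding bounded_iff by blast
  qed
  show ?thesis unfolding e using cl bd by (intro compact_Times compact_Icc) (simp_all add: compact_eq_bounded_closed)
qed

lemma comparison:
  fixes p :: real and k :: "'n::finite" and u :: "real^'n \<Rightarrow> real \<Rightarrow> real" and x0 :: "real^'n"
  assumes p2: "2 < p" and anc: "ancient_solution p k u"
    and d0: "0 < x0$k" and t0n: "t0 < 0" and t10: "t1 < t0" and ep: "0 < \<epsilon>" and c0: "0 < c" and K0: "0 < K"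
    and hK: "2*(x0$k)/K \<le> (1/(real CARD('n)+1))/2 * c powr (p-2)"
    and hc: "real CARD('n) * ((x0$k) powr ((1 - 1/(p-1)) - 2) * (8 * (8/(1/(real CARD('n)+1)))^3))
               < (1/(real CARD('n)+1))/2 * c powr p"
  shows "- (c + K/(t0 - t1)) * x0$k + (\<Sum>j\<in>UNIV. psi (1 - 1/(p-1)) (rr k (x0$k) j) (cen k x0 j) (x0$j)) - \<epsilon> \<le> u x0 t0"
proof -
  define d where "d = x0$k"
  define \<alpha> where "\<alpha> = 1 - 1/(p-1)"
  define W where "W x t = - (c + K/(t - t1)) * x$k + (\<Sum>j\<in>UNIV. psi \<alpha> (rr k d j) (cen k x0 j) (x$j))" for x :: "real^'n" and t
  note anc' = anc[unfolded ancient_solution_def]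
  note cont = conjunct1[OF anc']
  note Bex = conjunct1[OF conjunct2[OF anc']]
  note bc = conjunct2[OF conjunct2[OF anc']]
  from Bex obtain Du D2u ut where
    hyp: "\<forall>(x,t)\<in>QQ k. ((\<lambda>y. u y t) has_derivative (\<lambda>h. Du x t \<bullet> h)) (at x) \<and>
            ((\<lambda>y. Du y t) has_derivative (\<lambda>h. D2u x t *v h)) (at x) \<and>
            ((\<lambda>s. u x s) has_real_derivative ut x t) (at t) \<and>
            ut x t - (\<Sum>i\<in>UNIV. D2u x t $ i $ i) = norm (Du x t) powr p"
    by (elim exE conjE) (erule that)
  have hypx: "((\<lambda>y. u y t) has_derivative (\<lambda>h. Du x t \<bullet> h)) (at x) \<and>
            ((\<lambda>y. Du y t) has_derivative (\<lambda>h. D2u x t *v h)) (at x) \<and>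
            ((\<lambda>s. u x s) has_real_derivative ut x t) (at t) \<and>
            ut x t - (\<Sum>i\<in>UNIV. D2u x t $ i $ i) = norm (Du x t) powr p"
    if "0 < x$k" "t < 0" for x t
  proof -
    have "(x,t) \<in> QQ k" unfolding QQ_def half_space_def using that by simp
    from bspec[OF hyp this] show ?thesis by simp
  qed
  have dd0: "0 < d" unfolding d_def using d0 .
  have al0: "0 < \<alpha>" unfolding \<alpha>_def using p2 by (simp add: field_simps)
  have rr0: "0 < rr k d i" for i unfolding rr_def using dd0 by auto
  have rrd: "d \<le> rr k d i" for i unfolding rr_def using dd0 by auto
  have cenk: "cen k x0 k = 0" unfolding cen_def by simp
  define Kb where "Kb = {(x::real^'n,t::real). 0 \<le> x$k \<and> (\<forall>i. \<bar>x$i - cen k x0 i\<bar> \<le> rr k d i) \<and> t1 \<le> t \<and> t \<le> t0}"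
  have Kb_sub: "Kb \<subseteq> closure (QQ k)" unfolding closure_QQ Kb_def using t0n by auto
  have Kb_comp: "compact Kb" unfolding Kb_def by (rule Kset_compact)
  have x0Kb: "(x0,t0) \<in> Kb" unfolding Kb_def using dd0 t10 by (auto simp: cen_def rr_def d_def)
  have ucont: "continuous_on Kb (\<lambda>(x,t). u x t)" using continuous_on_subset[OF cont Kb_sub] .
  obtain pm where pm: "pm \<in> Kb" "\<forall>y\<in>Kb. (\<lambda>(x,t). u x t) pm \<le> (\<lambda>(x,t). u x t) y"
    using continuous_attains_inf[OF Kb_comp _ ucont] x0Kb by blast
  define M0 where "M0 = \<bar>(\<lambda>(x,t). u x t) pm\<bar>"
  have M00: "0 \<le> M0" unfolding M0_def by simp
  have M0b: "- M0 \<le> u x t" if "(x,t) \<in> Kb" for x t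
    using pm(2)[rule_format, OF that] unfolding M0_def by auto
  obtain \<eta> where eta0: "0 < \<eta>" and etau: "\<forall>a\<in>Kb. \<forall>b\<in>Kb. dist b a < \<eta> \<longrightarrow>
      dist ((\<lambda>(x,t). u x t) b) ((\<lambda>(x,t). u x t) a) < \<epsilon>/2"
    using compact_uniformly_continuous[OF ucont Kb_comp] ep unfolding uniformly_continuous_on_def
    by (meson half_gt_zero)
  have eta: "- (\<epsilon>/2) < u x t" if xt: "(x,t) \<in> Kb" and xe: "x$k < \<eta>" for x t
  proof -
    define x' where "x' = x - (x$k) *\<^sub>R axis k 1"
    have x'c: "x'$j = (if j = k then 0 else x$j)" for j unfolding x'_def by (simp add: axis_def)
    have "(x',t) \<in> Kb" using xt unfolding Kb_def by (auto simp: x'c cenk rr0 less_imp_le)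
    moreover have "dist (x',t) (x,t) = \<bar>x$k\<bar>" unfolding x'_def by (simp add: dist_Pair_Pair dist_norm)
    moreover have "0 \<le> x$k" using xt unfolding Kb_def by auto
    ultimately have "dist (x',t) (x,t) < \<eta>" using xe by simp
    with etau[rule_format, of "(x,t)" "(x',t)"] xt \<open>(x',t) \<in> Kb\<close>
    have "dist (u x' t) (u x t) < \<epsilon>/2" by simp
    moreover have "u x' t = 0" using bc xt t0n x'c unfolding Kb_def by auto
    ultimately show ?thesis by (simp add: dist_real_def)
  qed
  define q where "q = (M0+1) / d powr \<alpha>"
  define \<delta> where "\<delta> = 1 / (2 * (1 + q))"
  define \<tau> where "\<tau> = min ((t0 - t1)/2) (K * \<eta> / (M0+1))"
  define \<rho> where "\<rho> i = rr k d i * (1 - \<delta>)" for i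
  have dpa: "0 < d powr \<alpha>" using dd0 by simp
  have q0: "0 \<le> q" unfolding q_def using M00 dpa by simp
  have dq: "0 < 2 * (1 + q)" using q0 by (simp add: add_pos_nonneg)
  have del0: "0 < \<delta>" unfolding \<delta>_def using dq by (intro divide_pos_pos) auto
  have delh: "\<delta> \<le> 1/2" unfolding \<delta>_def using q0 dq by (intro divide_left_mono) auto
  have inv2d: "1 - 1 / (2 * \<delta>) = - q" unfolding \<delta>_def using dq by (simp add: field_simps)
  have tau0: "0 < \<tau>" unfolding \<tau>_def using t10 K0 eta0 M00 by auto
  have taut: "\<tau> < t0 - t1"
  proof -
    have "(t0 - t1)/2 < t0 - t1" using t10 by simp
    then show ?thesis unfolding \<tau>_def using min.cobounded1[of "(t0 - t1)/2" "K * \<eta> / (M0+1)"] by (rule order_le_less_trans[rotated])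
  qed
  have tauK: "M0 + 1 \<le> K * \<eta> / \<tau>"
  proof -
    have "\<tau> \<le> K * \<eta> / (M0+1)" unfolding \<tau>_def by simp
    then have "\<tau> * (M0+1) \<le> K * \<eta>" using M00 by (simp add: field_simps)
    then show ?thesis using tau0 by (simp add: field_simps)
  qed
  have rho_lt: "\<rho> i < rr k d i" for i unfolding \<rho>_def using rr0[of i] del0 by (simp add: mult_less_cancel_left1)
  have rho_pos: "0 < \<rho> i" for i unfolding \<rho>_def using rr0[of i] delh by simp
  define Ks where "Ks = {(x::real^'n,t::real). 0 \<le> x$k \<and> (\<forall>i. \<bar>x$i - cen k x0 i\<bar> \<le> \<rho> i) \<and> t1 + \<tau> \<le> t \<and> t \<le> t0}"
  have Ks_comp: "compact Ks" unfolding Ks_def by (rule Kset_compact)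
  have Ks_Kb: "Ks \<subseteq> Kb"
  proof
    fix z assume "z \<in> Ks"
    then obtain x t where z: "z = (x,t)" and h: "0 \<le> x$k" "\<forall>i. \<bar>x$i - cen k x0 i\<bar> \<le> \<rho> i" "t1 + \<tau> \<le> t" "t \<le> t0"
      unfolding Ks_def by auto
    have "\<forall>i. \<bar>x$i - cen k x0 i\<bar> \<le> rr k d i" using h(2) rho_lt by (meson less_imp_le order_trans)
    moreover have "t1 \<le> t" using h(3) tau0 by linarith
    ultimately show "z \<in> Kb" unfolding Kb_def z using h by simp
  qed
  have inz: "\<bar>(x$i - cen k x0 i) / rr k d i\<bar> < 1" if "(x,t) \<in> Ks" for x t i
  proof -
    have "\<bar>x$i - cen k x0 i\<bar> \<le> \<rho> i" using that unfolding Ks_def by simp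
    then have "\<bar>x$i - cen k x0 i\<bar> < rr k d i" using rho_lt[of i] by linarith
    moreover have "\<bar>(x$i - cen k x0 i) / rr k d i\<bar> = \<bar>x$i - cen k x0 i\<bar> / rr k d i"
      using rr0[of i] by (simp add: abs_divide)
    ultimately show ?thesis using rr0[of i] by (simp add: divide_less_eq_1_pos)
  qed
  have Ks_t: "t1 < t" if "(x,t) \<in> Ks" for x t
  proof -
    have "t1 + \<tau> \<le> t" using that unfolding Ks_def by simp
    then show ?thesis using tau0 by linarith
  qed
  have x0Ks: "(x0,t0) \<in> Ks"
  proof -
    have h1: "1 \<le> 2 * (1 - \<delta>)" using delh by (simp add: algebra_simps)
    have "d * 1 \<le> d * (2 * (1 - \<delta>))" using dd0 h1 by (intro mult_left_mono) auto
    then have dk: "d \<le> 2 * d * (1 - \<delta>)" by (simp add: algebra_simps)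
    have ci: "\<bar>x0$i - cen k x0 i\<bar> \<le> \<rho> i" for i
    proof (cases "i = k")
      case True
      then show ?thesis using dk dd0 unfolding \<rho>_def rr_def cen_def d_def by simp
    next
      case False
      then show ?thesis using rho_pos[of i] unfolding cen_def by simp
    qed
    have "t1 + \<tau> \<le> t0" using taut by linarith
    then show ?thesis unfolding Ks_def using ci dd0 unfolding d_def by simp
  qed
  define F where "F = (\<lambda>(x,t). u x t - W x t + \<epsilon>)"
  have Wcont: "continuous_on Ks (\<lambda>p. W (fst p) (snd p))"
    unfolding W_def psi_def Psi_def
  proof (intro continuous_intros continuous_on_divide ballI)
    fix pt assume "pt \<in> Ks"
    then show "snd pt - t1 \<noteq> 0" using Ks_t[of "fst pt" "snd pt"] by auto
  next
    fix j pt assume "pt \<in> Ks"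
    then have "\<bar>(fst pt $ j - cen k x0 j) / rr k d j\<bar> < 1" using inz[of "fst pt" "snd pt" j] by auto
    then show "1 - ((fst pt $ j - cen k x0 j) / rr k d j)\<^sup>2 \<noteq> 0" using sq_lt1 by fastforce
  next
    fix j pt show "rr k d j \<noteq> 0" using rr0[of j] by simp
  next
    fix j pt show "rr k d j \<noteq> 0" using rr0[of j] by simp
  qed
  have Fcont: "continuous_on Ks F"
  proof -
    have "continuous_on Ks (\<lambda>(x,t). u x t)" using continuous_on_subset[OF ucont Ks_Kb] .
    then have "continuous_on Ks (\<lambda>p. u (fst p) (snd p))" by (simp add: case_prod_unfold)
    then have "continuous_on Ks (\<lambda>p. u (fst p) (snd p) - W (fst p) (snd p) + \<epsilon>)"
      by (intro continuous_intros Wcont)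
    then show ?thesis unfolding F_def by (simp add: case_prod_unfold)
  qed
  obtain P where P: "P \<in> Ks" "\<forall>y\<in>Ks. F P \<le> F y"
    using continuous_attains_inf[OF Ks_comp _ Fcont] x0Ks by blast
  obtain xs ts where Pe: "P = (xs, ts)" by (cases P)
  have PKs: "(xs,ts) \<in> Ks" using P Pe by simp
  have Pmin: "\<And>y t. (y,t) \<in> Ks \<Longrightarrow> F (xs,ts) \<le> F (y,t)" using P Pe by auto
  have goalW: "W x0 t0 = - (c + K/(t0 - t1)) * x0$k + (\<Sum>j\<in>UNIV. psi (1 - 1/(p-1)) (rr k (x0$k) j) (cen k x0 j) (x0$j))"
    unfolding W_def \<alpha>_def d_def ..
  show ?thesis
  proof (rule ccontr)
    assume "\<not> ?thesis"
    then have "F (x0,t0) < 0" unfolding F_def using goalW by simp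
    then have FP: "F (xs,ts) < 0" using Pmin[OF x0Ks] by simp
    have xsKs: "0 \<le> xs$k" "\<forall>i. \<bar>xs$i - cen k x0 i\<bar> \<le> \<rho> i" "t1 + \<tau> \<le> ts" "ts \<le> t0"
      using PKs unfolding Ks_def by auto
    have PKb: "(xs,ts) \<in> Kb" using PKs Ks_Kb by auto
    have Fxs: "F (xs,ts) = u xs ts - W xs ts + \<epsilon>" by (simp add: F_def)
    have psinp: "psi \<alpha> (rr k d j) (cen k x0 j) (x$j) \<le> 0" if "(x,t) \<in> Ks" for x t j
      using psi_nonpos[OF inz[OF that, of j]] .
    have Wfirst: "- (c + K/(t - t1)) * x$k \<le> 0" if "(x,t) \<in> Ks" for x t
    proof -
      have "0 < K/(t - t1)" using K0 Ks_t[OF that] by simp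
      then have "0 < c + K/(t - t1)" using c0 by linarith
      moreover have "0 \<le> x$k" using that unfolding Ks_def by simp
      ultimately show ?thesis by (intro mult_nonpos_nonneg) auto
    qed
    have Wnp: "W x t \<le> - (c + K/(t - t1)) * x$k" if "(x,t) \<in> Ks" for x t
    proof -
      have "(\<Sum>j\<in>UNIV. psi \<alpha> (rr k d j) (cen k x0 j) (x$j)) \<le> 0"
        by (rule sum_nonpos) (use psinp[OF that] in auto)
      then show ?thesis unfolding W_def by linarith
    qed
    have Wle0: "W x t \<le> 0" if "(x,t) \<in> Ks" for x t using Wnp[OF that] Wfirst[OF that] by linarith
    have Wlei: "W x t \<le> psi \<alpha> (rr k d i) (cen k x0 i) (x$i)" if "(x,t) \<in> Ks" for x t i
    proof -
      have "(\<Sum>j\<in>UNIV. psi \<alpha> (rr k d j) (cen k x0 j) (x$j)) = psi \<alpha> (rr k d i) (cen k x0 i) (x$i) + (\<Sum>j\<in>UNIV - {i}. psi \<alpha> (rr k d j) (cen k x0 j) (x$j))"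
        by (rule sum.remove) auto
      moreover have "(\<Sum>j\<in>UNIV - {i}. psi \<alpha> (rr k d j) (cen k x0 j) (x$j)) \<le> 0"
        by (rule sum_nonpos) (use psinp[OF that] in auto)
      ultimately show ?thesis unfolding W_def using Wfirst[OF that] by linarith
    qed
    have uM: "- M0 \<le> u xs ts" using M0b[OF PKb] .
    have xsk: "\<eta> \<le> xs$k"
    proof (rule ccontr)
      assume "\<not> \<eta> \<le> xs$k"
      then have "- (\<epsilon>/2) < u xs ts" using eta[OF PKb] by simp
      moreover have "W xs ts \<le> 0" using Wle0[OF PKs] .
      ultimately have "0 < F (xs,ts)" unfolding Fxs using ep by linarith
      then show False using FP by simp
    qed
    have xspos: "0 < xs$k" using xsk eta0 by linarith
    have tsneg: "ts < 0" using xsKs(4) t0n by linarith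
    have xsi: "\<bar>xs$i - cen k x0 i\<bar> < \<rho> i" for i
    proof (rule ccontr)
      assume "\<not> \<bar>xs$i - cen k x0 i\<bar> < \<rho> i"
      then have ge: "\<rho> i \<le> \<bar>xs$i - cen k x0 i\<bar>" by simp
      have z1: "\<bar>(xs$i - cen k x0 i) / rr k d i\<bar> = \<bar>xs$i - cen k x0 i\<bar> / rr k d i"
        using rr0[of i] by (simp add: abs_divide)
      have "1 - \<delta> = \<rho> i / rr k d i" unfolding \<rho>_def using rr0[of i] by simp
      also have "\<dots> \<le> \<bar>xs$i - cen k x0 i\<bar> / rr k d i" using ge rr0[of i] by (simp add: divide_right_mono)
      finally have z2': "1 - \<delta> \<le> \<bar>xs$i - cen k x0 i\<bar> / rr k d i" .
      have z2: "1 - \<delta> \<le> \<bar>(xs$i - cen k x0 i) / rr k d i\<bar>" unfolding z1 by (rule z2')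
      have "psi \<alpha> (rr k d i) (cen k x0 i) (xs$i) \<le> rr k d i powr \<alpha> * (1 - 1 / (2 * \<delta>))"
        by (rule psi_face[OF rr0 inz[OF PKs] z2 del0])
      also have "\<dots> = - (rr k d i powr \<alpha> * q)" unfolding inv2d by simp
      also have "\<dots> \<le> - (d powr \<alpha> * q)"
      proof -
        have "d powr \<alpha> \<le> rr k d i powr \<alpha>" using rrd[of i] dd0 al0 by (intro powr_mono2) auto
        then show ?thesis using q0 by (simp add: mult_right_mono)
      qed
      also have "\<dots> = - (M0 + 1)" unfolding q_def using dpa by simp
      finally have "W xs ts \<le> - (M0 + 1)" using Wlei[OF PKs, of i] by linarith
      then have "0 < F (xs,ts)" unfolding Fxs using uM ep by linarith
      then show False using FP by simp
    qed
    have tsgt: "t1 + \<tau> < ts"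
    proof (rule ccontr)
      assume "\<not> t1 + \<tau> < ts"
      then have tse: "ts - t1 = \<tau>" using xsKs(3) by linarith
      have "(K/\<tau>) * \<eta> \<le> (K/\<tau>) * xs$k" using xsk K0 tau0 by (intro mult_left_mono) auto
      moreover have "0 \<le> c * xs$k" using c0 xspos by simp
      moreover have "(c + K/\<tau>) * xs$k = c * xs$k + (K/\<tau>) * xs$k" by (simp add: algebra_simps)
      moreover have "(K/\<tau>) * \<eta> = K * \<eta> / \<tau>" by simp
      ultimately have "M0 + 1 \<le> (c + K/(ts - t1)) * xs$k" using tauK unfolding tse by linarith
      then have "W xs ts \<le> - (M0 + 1)" using Wnp[OF PKs] by linarith
      then have "0 < F (xs,ts)" unfolding Fxs using uM ep by linarith
      then show False using FP by simp
    qed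
    have tst1: "t1 < ts" using tsgt tau0 by linarith
    define A where "A = c + K/(ts - t1)"
    have Wf: "W y ts = - A * y$k + (\<Sum>j\<in>UNIV. psi \<alpha> (rr k d j) (cen k x0 j) (y$j))" for y
      unfolding W_def A_def by simp
    have hx: "((\<lambda>y. u y ts) has_derivative (\<lambda>h. Du xs ts \<bullet> h)) (at xs) \<and>
            ((\<lambda>y. Du y ts) has_derivative (\<lambda>h. D2u xs ts *v h)) (at xs) \<and>
            ((\<lambda>s. u xs s) has_real_derivative ut xs ts) (at ts) \<and>
            ut xs ts - (\<Sum>i\<in>UNIV. D2u xs ts $ i $ i) = norm (Du xs ts) powr p"
      by (rule hypx[OF xspos tsneg])
    have comp: "Du xs ts $ i = psi1 \<alpha> (rr k d i) (cen k x0 i) (xs$i) - (if i = k then A else 0) \<and>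
                psi2 \<alpha> (rr k d i) (cen k x0 i) (xs$i) \<le> D2u xs ts $ i $ i" for i
    proof -
      define \<sigma> where "\<sigma> = min (\<rho> i - \<bar>xs$i - cen k x0 i\<bar>) (xs$k)"
      have s0: "0 < \<sigma>" unfolding \<sigma>_def using xsi[of i] xspos by simp
      have inKs: "(xs + s *\<^sub>R axis i 1, ts) \<in> Ks" if "\<bar>s\<bar> < \<sigma>" for s
      proof -
        have a1: "0 \<le> (xs + s *\<^sub>R axis i 1)$k"
        proof (cases "k = i")
          case True
          have "\<sigma> \<le> xs$k" unfolding \<sigma>_def by simp
          then show ?thesis using True that by (simp add: axis_def)
        next
          case False then show ?thesis using xsKs(1) by (simp add: axis_def)
        qed
        have a2: "\<bar>(xs + s *\<^sub>R axis i 1)$j - cen k x0 j\<bar> \<le> \<rho> j" for j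
        proof (cases "j = i")
          case True
          have "\<sigma> \<le> \<rho> i - \<bar>xs$i - cen k x0 i\<bar>" unfolding \<sigma>_def by simp
          moreover have "\<bar>xs$i + s - cen k x0 i\<bar> \<le> \<bar>xs$i - cen k x0 i\<bar> + \<bar>s\<bar>" by simp
          ultimately show ?thesis using True that by (simp add: axis_def)
        next
          case False then show ?thesis using xsKs(2) by (simp add: axis_def)
        qed
        show ?thesis unfolding Ks_def using a1 a2 xsKs(3,4) by simp
      qed
      have posk: "0 < (xs + s *\<^sub>R axis i 1)$k" if "\<bar>s\<bar> < \<sigma>" for s
      proof (cases "k = i")
        case True
        have "\<sigma> \<le> xs$k" unfolding \<sigma>_def by simp
        then show ?thesis using True that by (simp add: axis_def)
      next
        case False then show ?thesis using xspos by (simp add: axis_def)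
      qed
      define g where "g s = u (xs + s *\<^sub>R axis i 1) ts - W (xs + s *\<^sub>R axis i 1) ts + \<epsilon>" for s
      define g' where "g' s = Du (xs + s *\<^sub>R axis i 1) ts \<bullet> axis i 1
          - (psi1 \<alpha> (rr k d i) (cen k x0 i) (xs$i + s) - (if i = k then A else 0))" for s
      have dg: "\<forall>s. \<bar>s\<bar> < \<sigma> \<longrightarrow> (g has_real_derivative g' s) (at s)"
      proof (intro allI impI)
        fix s assume sl: "\<bar>s\<bar> < \<sigma>"
        have du: "((\<lambda>s. u (xs + s *\<^sub>R axis i 1) ts) has_real_derivative (Du (xs + s *\<^sub>R axis i 1) ts \<bullet> axis i 1)) (at s)"
          by (rule dir_deriv) (use hypx[OF posk[OF sl] tsneg] in simp)
        have pd: "(psi \<alpha> (rr k d i) (cen k x0 i) has_real_derivative psi1 \<alpha> (rr k d i) (cen k x0 i) (xs$i + s)) (at (xs$i + s))"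
          by (rule psi_deriv[OF rr0]) (use inz[OF inKs[OF sl], of i] in \<open>simp add: axis_def\<close>)
        have dw: "((\<lambda>s. W (xs + s *\<^sub>R axis i 1) ts) has_real_derivative
             (psi1 \<alpha> (rr k d i) (cen k x0 i) (xs$i + s) - (if i = k then A else 0))) (at s)"
          unfolding Wf
          by (rule sep_dir_deriv[where \<phi>="\<lambda>j. psi \<alpha> (rr k d j) (cen k x0 j)" and \<phi>'="\<lambda>j. psi1 \<alpha> (rr k d j) (cen k x0 j)", OF pd])
        have "((\<lambda>s. u (xs + s *\<^sub>R axis i 1) ts - W (xs + s *\<^sub>R axis i 1) ts + \<epsilon>) has_real_derivative
             (Du (xs + s *\<^sub>R axis i 1) ts \<bullet> axis i 1 - (psi1 \<alpha> (rr k d i) (cen k x0 i) (xs$i + s) - (if i = k then A else 0)) + 0)) (at s)"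
          by (rule DERIV_add[OF DERIV_diff[OF du dw] DERIV_const])
        then show "(g has_real_derivative g' s) (at s)" unfolding g_def g'_def by simp
      qed
      have gmin: "\<forall>s. \<bar>0 - s\<bar> < \<sigma> \<longrightarrow> g 0 \<le> g s"
      proof (intro allI impI)
        fix s assume "\<bar>0 - s\<bar> < \<sigma>"
        then have "F (xs,ts) \<le> F (xs + s *\<^sub>R axis i 1, ts)" using Pmin inKs by simp
        then show "g 0 \<le> g s" unfolding g_def F_def by simp
      qed
      have s00: "\<bar>0::real\<bar> < \<sigma>" using s0 by simp
      have g'0: "g' 0 = 0" using DERIV_local_min[OF dg[rule_format, OF s00] s0 gmin] .
      have c1: "Du xs ts $ i = psi1 \<alpha> (rr k d i) (cen k x0 i) (xs$i) - (if i = k then A else 0)"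
        using g'0 unfolding g'_def by (simp add: cart_eq_inner_axis)
      have d1: "((\<lambda>s. Du (xs + s *\<^sub>R axis i 1) ts \<bullet> axis i 1) has_real_derivative ((D2u xs ts *v axis i 1) \<bullet> axis i 1)) (at 0)"
        by (rule dir_deriv_vec) (use hx in simp)
      have pd1: "(psi1 \<alpha> (rr k d i) (cen k x0 i) has_real_derivative psi2 \<alpha> (rr k d i) (cen k x0 i) (xs$i)) (at (xs$i + 0))"
        using psi1_deriv[OF rr0 inz[OF PKs, of i]] by simp
      have lin: "((\<lambda>s. xs$i + s) has_real_derivative 1) (at 0)" by (auto intro!: derivative_eq_intros)
      have d2: "((\<lambda>s. psi1 \<alpha> (rr k d i) (cen k x0 i) (xs$i + s)) has_real_derivative psi2 \<alpha> (rr k d i) (cen k x0 i) (xs$i) * 1) (at 0)"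
        by (rule DERIV_chain2[OF pd1 lin])
      have "(g' has_real_derivative ((D2u xs ts *v axis i 1) \<bullet> axis i 1 - (psi2 \<alpha> (rr k d i) (cen k x0 i) (xs$i) * 1 - 0))) (at 0)"
        unfolding g'_def by (rule DERIV_diff[OF d1 DERIV_diff[OF d2 DERIV_const]])
      then have dg2: "(g' has_real_derivative (D2u xs ts $ i $ i - psi2 \<alpha> (rr k d i) (cen k x0 i) (xs$i))) (at 0)"
        by (simp add: diag_entry)
      have "0 \<le> D2u xs ts $ i $ i - psi2 \<alpha> (rr k d i) (cen k x0 i) (xs$i)"
        by (rule second_order_min[OF s0 _ dg dg2 g'0]) (use gmin in simp)
      then show ?thesis using c1 by simp
    qed
    have dW: "((\<lambda>t. W xs t) has_real_derivative K * xs$k / (ts - t1)^2) (at ts)"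
    proof -
      have l: "((\<lambda>t. t - t1) has_real_derivative 1) (at ts)" by (auto intro!: derivative_eq_intros)
      have e1: "((\<lambda>t. K / (t - t1)) has_real_derivative (0 * (ts - t1) - K * 1) / ((ts - t1) * (ts - t1))) (at ts)"
        by (rule DERIV_divide[OF DERIV_const l]) (use tst1 in simp)
      have "((\<lambda>t. - (c + K/(t - t1)) * xs$k + (\<Sum>j\<in>UNIV. psi \<alpha> (rr k d j) (cen k x0 j) (xs$j))) has_real_derivative
          (- (0 + (0 * (ts - t1) - K * 1) / ((ts - t1) * (ts - t1))) * xs$k + 0 * (- (c + K/(ts - t1)))) + 0) (at ts)"
        by (rule DERIV_add[OF DERIV_mult[OF DERIV_minus[OF DERIV_add[OF DERIV_const e1]] DERIV_const] DERIV_const])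
      moreover have "(- (0 + (0 * (ts - t1) - K * 1) / ((ts - t1) * (ts - t1))) * xs$k + 0 * (- (c + K/(ts - t1)))) + 0
          = K * xs$k / (ts - t1)^2" by (simp add: power2_eq_square)
      ultimately show ?thesis unfolding W_def by (rule DERIV_cong)
    qed
    have dh: "((\<lambda>t. u xs t - W xs t + \<epsilon>) has_real_derivative (ut xs ts - K * xs$k / (ts - t1)^2 + 0)) (at ts)"
      using hx by (intro DERIV_add DERIV_diff dW DERIV_const) auto
    have hmin: "\<forall>s. t1 + \<tau> \<le> s \<and> s \<le> ts \<longrightarrow> (\<lambda>t. u xs t - W xs t + \<epsilon>) ts \<le> (\<lambda>t. u xs t - W xs t + \<epsilon>) s"
    proof (intro allI impI)
      fix s assume sr: "t1 + \<tau> \<le> s \<and> s \<le> ts"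
      then have "(xs, s) \<in> Ks" using xsKs unfolding Ks_def by auto
      then have "F (xs,ts) \<le> F (xs,s)" by (rule Pmin)
      then show "(\<lambda>t. u xs t - W xs t + \<epsilon>) ts \<le> (\<lambda>t. u xs t - W xs t + \<epsilon>) s" unfolding F_def by simp
    qed
    have utb: "ut xs ts - K * xs$k / (ts - t1)^2 + 0 \<le> 0" by (rule time_min[OF dh tsgt hmin])
    define G :: "real^'n" where "G = (\<chi> i. psi1 (1 - 1/(p-1)) (rr k d i) (cen k x0 i) (xs$i) - (if i = k then c + K/(ts - t1) else 0))"
    have DuG: "Du xs ts = G" unfolding G_def vec_eq_iff using comp unfolding A_def \<alpha>_def by simp
    have xin: "\<forall>i. \<bar>(xs$i - cen k x0 i) / rr k d i\<bar> < 1" using inz[OF PKs] by simp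
    have xsk2: "xs$k \<le> 2*d"
    proof -
      have "\<bar>xs$k - cen k x0 k\<bar> \<le> \<rho> k" using xsKs(2) by simp
      moreover have "\<rho> k \<le> 2*d" unfolding \<rho>_def rr_def using dd0 del0 delh by (simp add: mult_left_le)
      ultimately show ?thesis using xspos by (simp add: cenk)
    qed
    have key: "K * xs$k / (ts - t1)^2 - (\<Sum>i\<in>UNIV. psi2 (1 - 1/(p-1)) (rr k d i) (cen k x0 i) (xs$i)) < norm G powr p"
      unfolding G_def
      by (rule key_ineq[OF p2 dd0 tst1 xspos xin c0 K0 xsk2]) (use hK hc in \<open>simp_all add: d_def\<close>)
    have sD: "(\<Sum>i\<in>UNIV. psi2 (1 - 1/(p-1)) (rr k d i) (cen k x0 i) (xs$i)) \<le> (\<Sum>i\<in>UNIV. D2u xs ts $ i $ i)"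
      by (rule sum_mono) (use comp in \<open>simp add: \<alpha>_def\<close>)
    have eq: "ut xs ts - (\<Sum>i\<in>UNIV. D2u xs ts $ i $ i) = norm G powr p" using hx DuG by simp
    show False using key sD eq utb by linarith
  qed
qed

lemma sum_psi_x0:
  fixes k :: "'n::finite" and x :: "real^'n"
  assumes d0: "0 < x$k"
  shows "(\<Sum>j\<in>UNIV. psi \<alpha> (rr k (x$k) j) (cen k x j) (x$j)) = - ((2 * x$k) powr \<alpha> / 3)"
proof -
  have "(\<Sum>j\<in>UNIV. psi \<alpha> (rr k (x$k) j) (cen k x j) (x$j)) = psi \<alpha> (rr k (x$k) k) (cen k x k) (x$k) + (\<Sum>j\<in>UNIV - {k}. psi \<alpha> (rr k (x$k) j) (cen k x j) (x$j))"
    by (rule sum.remove) auto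
  also have "(\<Sum>j\<in>UNIV - {k}. psi \<alpha> (rr k (x$k) j) (cen k x j) (x$j)) = 0"
    by (rule sum.neutral) (auto simp: psi_def cen_def Psi_0)
  also have "psi \<alpha> (rr k (x$k) k) (cen k x k) (x$k) = (2 * x$k) powr \<alpha> * Psi (1/2)"
    unfolding psi_def rr_def cen_def using d0 by simp
  finally show ?thesis by (simp add: Psi_half)
qed

theorem lemma5p3:
  fixes p :: real and k :: "'n::finite"
  assumes "p > 2"
  shows "\<exists>C>0. \<forall>u :: real^'n \<Rightarrow> real \<Rightarrow> real. ancient_solution p k u \<longrightarrow>
           (\<forall>x t. (x, t) \<in> QQ k \<longrightarrow> u x t \<ge> - C * (x $ k) powr (1 - 1 / (p - 1)))"
proof -
  have p2: "2 < p" using assms .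
  define N where "N = real CARD('n)"
  define \<kappa> where "\<kappa> = 1/(N+1)"
  define S0 where "S0 = 8 * (8/\<kappa>)^3"
  define M where "M = 2 * N * (N+1) * S0 + 1"
  define \<alpha> where "\<alpha> = 1 - 1/(p-1)"
  define C where "C = M powr (1/p) + 2 powr \<alpha> / 3"
  have N0: "0 \<le> N" unfolding N_def by simp
  have k0: "0 < \<kappa>" unfolding \<kappa>_def using N0 by simp
  have S00: "0 \<le> S0" unfolding S0_def using k0 by simp
  have M1: "1 \<le> M" unfolding M_def using N0 S00 by simp
  have C0: "0 < C" unfolding C_def using M1 by (simp add: add_pos_nonneg)
  show ?thesis
  proof (intro exI[of _ C] conjI allI impI)
    show "0 < C" by (rule C0)
    fix u :: "real^'n \<Rightarrow> real \<Rightarrow> real" and x t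
    assume anc: "ancient_solution p k u" and xt: "(x,t) \<in> QQ k"
    define d where "d = x$k"
    have d0: "0 < d" and tn: "t < 0" using xt unfolding QQ_def half_space_def d_def by auto
    define c where "c = (M * d powr (\<alpha> - 2)) powr (1/p)"
    have cp: "c powr p = M * d powr (\<alpha> - 2)" unfolding c_def using p2 M1 d0 by (simp add: powr_powr)
    have c0: "0 < c" unfolding c_def using M1 d0 by simp
    define K where "K = 4 * d / (\<kappa> * c powr (p - 2))"
    have K0: "0 < K" unfolding K_def using d0 k0 c0 by simp
    have hK: "2*(x$k)/K \<le> (1/(real CARD('n)+1))/2 * c powr (p-2)"
    proof -
      have "2*d/K = \<kappa>/2 * c powr (p-2)" unfolding K_def using d0 k0 c0 by (simp add: field_simps)
      then show ?thesis unfolding \<kappa>_def N_def d_def by simp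
    qed
    have hc: "real CARD('n) * ((x$k) powr ((1 - 1/(p-1)) - 2) * (8 * (8/(1/(real CARD('n)+1)))^3))
               < (1/(real CARD('n)+1))/2 * c powr p"
    proof -
      have e: "\<kappa>/2 * c powr p = (N * S0 + \<kappa>/2) * d powr (\<alpha> - 2)"
        unfolding cp M_def \<kappa>_def using N0 by (simp add: field_simps)
      have "N * (d powr (\<alpha> - 2) * S0) < (N * S0 + \<kappa>/2) * d powr (\<alpha> - 2)"
        using k0 d0 by (simp add: algebra_simps)
      then have "N * (d powr (\<alpha> - 2) * S0) < \<kappa>/2 * c powr p" using e by simp
      then show ?thesis unfolding N_def \<kappa>_def S0_def \<alpha>_def d_def by simp
    qed
    have sx: "(\<Sum>j\<in>UNIV. psi (1 - 1/(p-1)) (rr k (x$k) j) (cen k x j) (x$j)) = - ((2 * d) powr \<alpha> / 3)"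
      unfolding d_def \<alpha>_def by (rule sum_psi_x0) (use d0 in \<open>simp add: d_def\<close>)
    have bound: "- (c + K/(t - t1)) * d - (2 * d) powr \<alpha> / 3 - \<epsilon> \<le> u x t" if "t1 < t" "0 < \<epsilon>" for t1 \<epsilon>
      using comparison[OF p2 anc _ tn that(1) that(2) c0 K0 hK hc] d0 sx unfolding d_def by simp
    define B where "B = u x t + c * d + (2 * d) powr \<alpha> / 3"
    have B0: "0 \<le> B"
    proof (rule ccontr)
      assume "\<not> 0 \<le> B"
      then have Bn: "B < 0" by simp
      define T where "T = - 4 * K * d / B"
      have T0: "0 < T" unfolding T_def using Bn K0 d0 by (simp add: divide_pos_neg)
      have "- (c + K/(t - (t - T))) * d - (2 * d) powr \<alpha> / 3 - (- B/2) \<le> u x t"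
        by (rule bound) (use T0 Bn in auto)
      moreover have "K/(t - (t - T)) * d = - B / 4" unfolding T_def using Bn K0 d0 by (simp add: field_simps)
      ultimately have "- (c * d) - (- B / 4) - (2 * d) powr \<alpha> / 3 + B/2 \<le> u x t" by (simp add: algebra_simps)
      moreover have "- (c * d) - (2 * d) powr \<alpha> / 3 = u x t - B" unfolding B_def by simp
      ultimately show False using Bn by linarith
    qed
    have cd: "c * d = M powr (1/p) * d powr \<alpha>"
    proof -
      have "c = M powr (1/p) * d powr ((\<alpha> - 2) / p)" unfolding c_def using M1 d0 by (simp add: powr_mult powr_powr)
      then have "c * d = M powr (1/p) * (d powr ((\<alpha> - 2) / p) * d powr 1)" using d0 by simp
      also have "d powr ((\<alpha> - 2) / p) * d powr 1 = d powr \<alpha>"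
      proof -
        have ea: "(\<alpha> - 2) / p + 1 = \<alpha>" unfolding \<alpha>_def using p2 by (simp add: field_simps)
        have "d powr ((\<alpha> - 2) / p) * d powr 1 = d powr ((\<alpha> - 2) / p + 1)" by (simp only: powr_add)
        then show ?thesis unfolding ea .
      qed
      finally show ?thesis .
    qed
    have dd: "(2 * d) powr \<alpha> = 2 powr \<alpha> * d powr \<alpha>" using d0 by (simp add: powr_mult)
    have "- C * d powr \<alpha> = - (c * d) - (2 * d) powr \<alpha> / 3" unfolding C_def cd dd by (simp add: algebra_simps)
    also have "\<dots> \<le> u x t" using B0 unfolding B_def by simp
    finally show "- C * (x $ k) powr (1 - 1 / (p - 1)) \<le> u x t" unfolding d_def \<alpha>_def .
  qed
qed

end
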